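(* Let $\beta$ be a braid on $b$ strands, let $2\le a<b$, let $1\le i\le b-a+1$, and let $$\alpha^{\pm}=(\sigma_i^{\pm1}\sigma_{i+1}^{\pm1}\cdots\sigma_{i+a-2}^{\pm1})^{a}$$ (a positive, respectively negative, full twist on the $a$ strands in positions $i,\dots,i+a-1$). For $m\ge 1$ let $L^m_{\pm}$ denote the transverse link given by the closure of $\beta(\alpha^{\pm})^m$. Then (for each choice of sign) there is some $N$ such that for all $m>N$, $\psi(L^m_{\pm})=0$ if and only if $\psi(L^{m+1}_{\pm})=0$. Similarly, for all such $m$, $\psi'(L^m_{\pm})=0$ if and only if $\psi'(L^{m+1}_{\pm})=0$.
   Context: $B_b$ is the Artin braid group with standard generators $\sigma_1,\dots,\sigma_{b-1}$; closures of braids are transverse links in the standard contact $S^3$. Khovanov complex conventions: for an oriented diagram with $n_\pm$ positive/negative crossings, generators are Kauffman states (a $0$- or $1$-resolution at each crossing) with each resulting circle labelled $v_+$ or $v_-$; homological grading $i=r-n_-$ ($r$ = number of $1$-resolutions), quantum grading $j=p+i+n_+-n_-$ where $p$ = (number of $v_+$) − (number of $v_-$); the differential uses the standard merge/split maps. $\psi(\hat\beta)$ (Plamenevskaya's invariant) is the Khovanov homology class of the generator labelling every circle $v_-$ in the oriented resolution of the closed braid diagram (the $0$-resolution at positive crossings, the $1$-resolution at negative crossings). $\psi'$ is the analogous class in reduced Khovanov homology over $\mathbb{Z}/2\mathbb{Z}$ (quotient by generators with $v_-$ on the circle through a marked point), given by labelling the marked circle $v_+$ and all other circles $v_-$ in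 the oriented resolution. *)

theory Defs
  imports Main
begin

(* Braid words.  A letter (k, True) is sigma_k, (k, False) is sigma_k^-1. *)
type_synonym bword = "(nat \<times> bool) list"

definition braid_word :: "nat \<Rightarrow> bword \<Rightarrow> bool" where
  "braid_word b w \<longleftrightarrow> (\<forall>l\<in>set w. 1 \<le> fst l \<and> fst l < b)"

definition full_twist :: "nat \<Rightarrow> nat \<Rightarrow> bool \<Rightarrow> bword" where
  "full_twist a i e = concat (replicate a (map (\<lambda>k. (k, e)) [i..<i + a - 1]))"

(* The crossing number t (0 <= t < length w) lies between level t and
   level (t+1) mod length w (levels are cyclic because of the closure).
   A point (t,x) is the intersection of the diagram with level t at strand
   position x, 1 <= x <= b.  A state s is the set of crossings given the
   1-resolution.                                                       *)
definition pts :: "bword \<Rightarrow> nat \<Rightarrow> (nat \<times> nat) set" where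
  "pts w b = {0..<length w} \<times> {1..b}"

definition nxt :: "bword \<Rightarrow> nat \<Rightarrow> nat" where
  "nxt w t = Suc t mod length w"

(* positive crossing: 0-resolution is the oriented (vertical) smoothing;
   negative crossing: 1-resolution is the oriented (vertical) smoothing *)
definition vertical :: "bword \<Rightarrow> nat set \<Rightarrow> nat \<Rightarrow> bool" where
  "vertical w s t \<longleftrightarrow> (snd (w ! t) \<longleftrightarrow> t \<notin> s)"

definition res_edge :: "bword \<Rightarrow> nat set \<Rightarrow> nat \<times> nat \<Rightarrow> nat \<times> nat \<Rightarrow> bool" where
  "res_edge w s p q \<longleftrightarrow>
     (\<exists>t < length w. let k = fst (w ! t) in
        \<comment> \<open>strands not involved in crossing t, and the vertical (oriented) smoothing\<close>
        (\<exists>x. p = (t, x) \<and> q = (nxt w t, x) \<and> (x \<noteq> k \<and> x \<noteq> k + 1 \<or> vertical w s t))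
        \<comment> \<open>the horizontal smoothing: upper arc at level t, lower arc at level t+1\<close>
      \<or> (\<not> vertical w s t \<and>
          ((p = (t, k) \<and> q = (t, k + 1)) \<or> (p = (nxt w t, k) \<and> q = (nxt w t, k + 1)))))"

definition conn :: "bword \<Rightarrow> nat \<Rightarrow> nat set \<Rightarrow> nat \<times> nat \<Rightarrow> nat \<times> nat \<Rightarrow> bool" where
  "conn w b s = (\<lambda>p q. p \<in> pts w b \<and> q \<in> pts w b \<and> (res_edge w s p q \<or> res_edge w s q p))\<^sup>*\<^sup>*"

definition circle_of :: "bword \<Rightarrow> nat \<Rightarrow> nat set \<Rightarrow> nat \<times> nat \<Rightarrow> (nat \<times> nat) set" where
  "circle_of w b s p = {q \<in> pts w b. conn w b s p q}"

definition circles :: "bword \<Rightarrow> nat \<Rightarrow> nat set \<Rightarrow> (nat \<times> nat) set set" where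
  "circles w b s = circle_of w b s ` pts w b"

(* Khovanov chain complex.  A generator is (s, P): a state s and the set
   P of circles labelled v_+ (all other circles labelled v_-).          *)
type_synonym kgen = "nat set \<times> (nat \<times> nat) set set"

definition kgens :: "bword \<Rightarrow> nat \<Rightarrow> kgen set" where
  "kgens w b = {(s, P). s \<subseteq> {0..<length w} \<and> P \<subseteq> circles w b s}"

(* the generator (s',P') occurs (with coefficient 1) in the image of (s,P)
   under the merge/split map for changing crossing c from 0 to 1, where
   s' = insert c s.  Merge m: v+v+ -> v+, v+v- -> v-, v-v- -> 0;
   split D: v+ -> v+v- + v-v+, v- -> v-v-. *)
definition incident :: "bword \<Rightarrow> nat \<Rightarrow> kgen \<Rightarrow> kgen \<Rightarrow> bool" where
  "incident w b x y \<longleftrightarrow>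
     (let s = fst x; P = snd x; s' = fst y; P' = snd y;
          Old = circles w b s - circles w b s'; New = circles w b s' - circles w b s in
       (\<forall>C \<in> circles w b s \<inter> circles w b s'. C \<in> P \<longleftrightarrow> C \<in> P') \<and>
       ((\<exists>A B C. A \<noteq> B \<and> Old = {A, B} \<and> New = {C} \<and> (A \<in> P \<or> B \<in> P) \<and>
            (C \<in> P' \<longleftrightarrow> A \<in> P \<and> B \<in> P))
        \<or> (\<exists>A C D. C \<noteq> D \<and> Old = {A} \<and> New = {C, D} \<and>
            (if A \<in> P then (C \<in> P') \<noteq> (D \<in> P') else C \<notin> P' \<and> D \<notin> P'))))"

(* matrix coefficient of the Khovanov differential, with the sign
   (-1)^(number of 1-resolved crossings preceding c) *)
definition kh_coeff :: "bword \<Rightarrow> nat \<Rightarrow> kgen \<Rightarrow> kgen \<Rightarrow> int" where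
  "kh_coeff w b x y =
     (\<Sum>c\<in>{0..<length w} - fst x.
        if fst y = insert c (fst x) \<and> incident w b x y
        then (-1) ^ card {c' \<in> fst x. c' < c} else 0)"

(* differential applied to a chain f (a function on generators) *)
definition kh_d :: "bword \<Rightarrow> nat \<Rightarrow> (kgen \<Rightarrow> int) \<Rightarrow> kgen \<Rightarrow> int" where
  "kh_d w b f y = (\<Sum>x\<in>kgens w b. f x * kh_coeff w b x y)"

definition oriented_state :: "bword \<Rightarrow> nat set" where
  "oriented_state w = {t. t < length w \<and> \<not> snd (w ! t)}"

(* Plamenevskaya's generator: all circles of the oriented resolution v_- *)
definition psi_gen :: "bword \<Rightarrow> kgen" where
  "psi_gen w = (oriented_state w, {})"

(* psi(closure of w) = 0 in Kh(;Z): the cycle psi_gen is a boundary *)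
definition psi_vanishes :: "nat \<Rightarrow> bword \<Rightarrow> bool" where
  "psi_vanishes b w \<longleftrightarrow>
     (\<exists>f. \<forall>y\<in>kgens w b. kh_d w b f y = (if y = psi_gen w then 1 else 0))"

(* reduced version over Z/2, marked point (0,q) on level 0:
   the quotient complex has basis the generators whose marked circle is v_+ *)
definition psi'_gen :: "bword \<Rightarrow> nat \<Rightarrow> nat \<Rightarrow> kgen" where
  "psi'_gen w b q = (oriented_state w, {circle_of w b (oriented_state w) (0, q)})"

definition psi'_vanishes :: "nat \<Rightarrow> nat \<Rightarrow> bword \<Rightarrow> bool" where
  "psi'_vanishes b q w \<longleftrightarrow>
     (\<exists>f. \<forall>y\<in>kgens w b. circle_of w b (fst y) (0, q) \<in> snd y \<longrightarrow>
        even (kh_d w b f y - (if y = psi'_gen w b q then 1 else 0)))"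

end

theory Submission
  imports Defs
begin

definition ext :: "bword \<Rightarrow> bool \<Rightarrow> nat set \<Rightarrow> nat set" where
  "ext w e s = (if e then s else insert (length w) s)"

definition prj :: "bword \<Rightarrow> nat \<times> nat \<Rightarrow> nat \<times> nat" where
  "prj w p = (if fst p = length w then (0, snd p) else p)"

lemma nxt_app:
  assumes "t < length w"
  shows "prj w (nxt (w @ [c]) t, x) = (nxt w t, x)"
  using assms unfolding prj_def nxt_def
  by (cases "Suc t = length w") auto

lemma nxt_app_last: "nxt (w @ [c]) (length w) = 0"
  unfolding nxt_def by simp

lemma nxt_app_lt: "Suc t < length w \<Longrightarrow> nxt (w @ [c]) t = nxt w t"
  unfolding nxt_def by simp

lemma nxt_app_eq: "Suc t = length w \<Longrightarrow> nxt (w @ [c]) t = length w"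
  unfolding nxt_def by simp

lemma nxt_eq0: "Suc t = length w \<Longrightarrow> nxt w t = 0"
  unfolding nxt_def by simp

lemma vert_app:
  assumes "t < length w"
  shows "vertical (w @ [c]) (ext w e s) t = vertical w s t"
  using assms unfolding vertical_def ext_def by (auto simp: nth_append)

lemma vert_last:
  assumes "length w \<notin> s"
  shows "vertical (w @ [c]) (ext w (snd c) s) (length w)"
  using assms unfolding vertical_def ext_def by auto

lemma edgeA:
  assumes "length w \<notin> s" "res_edge (w @ [c]) (ext w (snd c) s) p q"
  shows "prj w p = prj w q \<or> res_edge w s (prj w p) (prj w q)"
proof -
  let ?w = "w @ [c]" let ?s = "ext w (snd c) s"
  from assms(2) obtain t where t: "t < Suc (length w)" and
    body: "let k = fst (?w ! t) in
        (\<exists>x. p = (t, x) \<and> q = (nxt ?w t, x) \<and> (x \<noteq> k \<and> x \<noteq> k + 1 \<or> vertical ?w ?s t))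
      \<or> (\<not> vertical ?w ?s t \<and>
          ((p = (t, k) \<and> q = (t, k + 1)) \<or> (p = (nxt ?w t, k) \<and> q = (nxt ?w t, k + 1))))"
    unfolding res_edge_def by auto
  show ?thesis
  proof (cases "t = length w")
    case True
    then have v: "vertical ?w ?s t" using vert_last[OF assms(1)] by simp
    from body v obtain x where "p = (t, x)" "q = (nxt ?w t, x)" by (auto simp: Let_def)
    then show ?thesis using True nxt_app_last[of w c] by (simp add: prj_def)
  next
    case False
    then have tl: "t < length w" using t by simp
    have v: "vertical ?w ?s t = vertical w s t" using vert_app[OF tl] .
    have wt: "?w ! t = w ! t" using tl by (simp add: nth_append)
    have pt: "\<And>x. prj w (t, x) = (t, x)" using tl by (simp add: prj_def)
    have pn: "\<And>x. prj w (nxt ?w t, x) = (nxt w t, x)" using nxt_app[OF tl] .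
    have "res_edge w s (prj w p) (prj w q)"
      unfolding res_edge_def
      apply (rule exI[of _ t])
      using body tl v wt pt pn by (auto simp: Let_def)
    then show ?thesis by simp
  qed
qed


lemma ptsI: "t < length w \<Longrightarrow> 1 \<le> x \<Longrightarrow> x \<le> b \<Longrightarrow> (t, x) \<in> pts w b"
  unfolding pts_def by auto

lemma pts_app: "p \<in> pts w b \<Longrightarrow> p \<in> pts (w @ [c]) b"
  unfolding pts_def by auto

lemma conn_step: "p \<in> pts w b \<Longrightarrow> q \<in> pts w b \<Longrightarrow> res_edge w s p q \<Longrightarrow> conn w b s p q"
  unfolding conn_def by (rule r_into_rtranclp) auto

lemma conn_step': "p \<in> pts w b \<Longrightarrow> q \<in> pts w b \<Longrightarrow> res_edge w s q p \<Longrightarrow> conn w b s p q"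
  unfolding conn_def by (rule r_into_rtranclp) auto

lemma conn_trans: "conn w b s p q \<Longrightarrow> conn w b s q r \<Longrightarrow> conn w b s p r"
  unfolding conn_def by simp

lemma conn_sym: "conn w b s p q \<Longrightarrow> conn w b s q p"
  unfolding conn_def
proof (induction rule: rtranclp.induct)
  case (rtrancl_refl a) then show ?case by simp
next
  case (rtrancl_into_rtrancl a b' c)
  show ?case
    apply (rule converse_rtranclp_into_rtranclp[OF _ rtrancl_into_rtrancl.IH])
    using rtrancl_into_rtrancl.hyps(2) by auto
qed

lemma last_edge:
  assumes "length w \<notin> s" "1 \<le> x" "x \<le> b"
  shows "res_edge (w @ [c]) (ext w (snd c) s) (length w, x) (0, x)"
  unfolding res_edge_def
  apply (rule exI[of _ "length w"])
  using vert_last[OF assms(1), of c] nxt_app_last[of w c] by (auto simp: Let_def)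

lemma edgeB:
  assumes "length w \<notin> s" "res_edge w s p q" "p \<in> pts w b" "q \<in> pts w b"
  shows "conn (w @ [c]) b (ext w (snd c) s) p q"
proof -
  let ?w = "w @ [c]" let ?s = "ext w (snd c) s"
  from assms(2) obtain t where tl: "t < length w" and
    body: "let k = fst (w ! t) in
        (\<exists>x. p = (t, x) \<and> q = (nxt w t, x) \<and> (x \<noteq> k \<and> x \<noteq> k + 1 \<or> vertical w s t))
      \<or> (\<not> vertical w s t \<and>
          ((p = (t, k) \<and> q = (t, k + 1)) \<or> (p = (nxt w t, k) \<and> q = (nxt w t, k + 1))))"
    unfolding res_edge_def by auto
  have v: "vertical ?w ?s t = vertical w s t" using vert_app[OF tl] .
  have wt: "?w ! t = w ! t" using tl by (simp add: nth_append)
  have pw: "p \<in> pts ?w b" "q \<in> pts ?w b" using assms(3,4) pts_app by auto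
  let ?k = "fst (w ! t)"
  show ?thesis
  proof (cases "Suc t < length w")
    case True
    have "res_edge ?w ?s p q"
      unfolding res_edge_def
      apply (rule exI[of _ t])
      using body tl v wt nxt_app_lt[OF True, of c] by (auto simp: Let_def)
    then show ?thesis using conn_step pw by metis
  next
    case False
    then have te: "Suc t = length w" using tl by simp
    have n1: "nxt ?w t = length w" using nxt_app_eq[OF te] .
    have n0: "nxt w t = 0" using nxt_eq0[OF te] .
    have upper: "\<And>x. (x \<noteq> ?k \<and> x \<noteq> ?k + 1 \<or> vertical w s t) \<Longrightarrow> res_edge ?w ?s (t, x) (length w, x)"
      unfolding res_edge_def apply (rule exI[of _ t]) using tl n1 v wt by (auto simp: Let_def)
    consider (a) x where "p = (t, x)" "q = (0, x)" "x \<noteq> ?k \<and> x \<noteq> ?k + 1 \<or> vertical w s t"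
      | (b) "\<not> vertical w s t" "p = (t, ?k)" "q = (t, ?k + 1)"
      | (c) "\<not> vertical w s t" "p = (0, ?k)" "q = (0, ?k + 1)"
      using body n0 by (auto simp: Let_def)
    then show ?thesis
    proof cases
      case a
      have x: "1 \<le> x" "x \<le> b" using assms(4) a unfolding pts_def by auto
      have m: "(length w, x) \<in> pts ?w b" by (rule ptsI) (use x in auto)
      have "conn ?w b ?s p (length w, x)"
        using conn_step[OF pw(1) m] a upper by simp
      moreover have "conn ?w b ?s (length w, x) q"
        using conn_step[OF m pw(2)] a last_edge[OF assms(1) x] by simp
      ultimately show ?thesis by (rule conn_trans)
    next
      case b
      have "res_edge ?w ?s p q"
        unfolding res_edge_def apply (rule exI[of _ t]) using b tl v wt by (auto simp: Let_def)
      then show ?thesis using conn_step pw by metis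
    next
      case c
      have x: "1 \<le> ?k" "?k + 1 \<le> b" using assms(3,4) c unfolding pts_def by auto
      have m1: "(length w, ?k) \<in> pts ?w b" by (rule ptsI) (use x in auto)
      have m2: "(length w, ?k + 1) \<in> pts ?w b" by (rule ptsI) (use x in auto)
      have e2: "res_edge ?w ?s (length w, ?k) (length w, ?k + 1)"
        unfolding res_edge_def apply (rule exI[of _ t]) using c tl v wt n1 by (auto simp: Let_def)
      have "conn ?w b ?s p (length w, ?k)"
        using conn_step'[OF pw(1) m1] c last_edge[OF assms(1), of ?k b c] x by simp
      moreover have "conn ?w b ?s (length w, ?k) (length w, ?k + 1)"
        using conn_step[OF m1 m2 e2] .
      moreover have "conn ?w b ?s (length w, ?k + 1) q"
        using conn_step[OF m2 pw(2)] c last_edge[OF assms(1), of "?k+1" b c] x by simp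
      ultimately show ?thesis by (meson conn_trans)
    qed
  qed
qed


lemma prj_pts: "w \<noteq> [] \<Longrightarrow> p \<in> pts (w @ [c]) b \<Longrightarrow> prj w p \<in> pts w b"
  unfolding pts_def prj_def by (cases p) auto

lemma prj_id: "p \<in> pts w b \<Longrightarrow> prj w p = p"
  unfolding pts_def prj_def by (cases p) auto

lemma conn_down:
  assumes "w \<noteq> []" "length w \<notin> s" "conn (w @ [c]) b (ext w (snd c) s) p q"
  shows "conn w b s (prj w p) (prj w q)"
  using assms(3) unfolding conn_def
proof (induction rule: rtranclp.induct)
  case (rtrancl_refl a) then show ?case by simp
next
  case (rtrancl_into_rtrancl a y z)
  have y: "y \<in> pts (w @ [c]) b" and z: "z \<in> pts (w @ [c]) b"
    and e: "res_edge (w @ [c]) (ext w (snd c) s) y z \<or> res_edge (w @ [c]) (ext w (snd c) s) z y"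
    using rtrancl_into_rtrancl.hyps(2) by auto
  have py: "prj w y \<in> pts w b" and pz: "prj w z \<in> pts w b"
    using prj_pts[OF assms(1)] y z by auto
  have "conn w b s (prj w y) (prj w z)"
  proof (cases "prj w y = prj w z")
    case True then show ?thesis by (simp add: conn_def)
  next
    case False
    then have "res_edge w s (prj w y) (prj w z) \<or> res_edge w s (prj w z) (prj w y)"
      using e edgeA[OF assms(2)] by metis
    then show ?thesis using conn_step[OF py pz] conn_step'[OF py pz] by blast
  qed
  then show ?case using rtrancl_into_rtrancl.IH unfolding conn_def by simp
qed

lemma conn_up:
  assumes "length w \<notin> s" "conn w b s p q"
  shows "conn (w @ [c]) b (ext w (snd c) s) p q"
  using assms(2) unfolding conn_def
proof (induction rule: rtranclp.induct)
  case (rtrancl_refl a) then show ?case by simp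
next
  case (rtrancl_into_rtrancl a y z)
  have y: "y \<in> pts w b" and z: "z \<in> pts w b"
    and e: "res_edge w s y z \<or> res_edge w s z y"
    using rtrancl_into_rtrancl.hyps(2) by auto
  have "conn (w @ [c]) b (ext w (snd c) s) y z"
    using e edgeB[OF assms(1) _ y z] edgeB[OF assms(1) _ z y] conn_sym by blast
  then show ?case using rtrancl_into_rtrancl.IH unfolding conn_def by simp
qed

lemma conn_prj:
  assumes "length w \<notin> s" "p \<in> pts (w @ [c]) b"
  shows "conn (w @ [c]) b (ext w (snd c) s) p (prj w p)"
proof (cases "fst p = length w")
  case True
  obtain x where p: "p = (length w, x)" using True by (cases p) auto
  have x: "1 \<le> x" "x \<le> b" using assms(2) p unfolding pts_def by auto
  have "(0, x) \<in> pts (w @ [c]) b" by (rule ptsI) (use x in auto)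
  then show ?thesis using conn_step[OF assms(2)] last_edge[OF assms(1) x] p
    by (simp add: prj_def)
next
  case False
  then show ?thesis by (simp add: prj_def conn_def)
qed

lemma conn_iff:
  assumes "w \<noteq> []" "length w \<notin> s" "p \<in> pts (w @ [c]) b" "q \<in> pts (w @ [c]) b"
  shows "conn (w @ [c]) b (ext w (snd c) s) p q \<longleftrightarrow> conn w b s (prj w p) (prj w q)"
proof
  assume "conn (w @ [c]) b (ext w (snd c) s) p q"
  then show "conn w b s (prj w p) (prj w q)" using conn_down[OF assms(1,2)] by blast
next
  assume "conn w b s (prj w p) (prj w q)"
  then have 1: "conn (w @ [c]) b (ext w (snd c) s) (prj w p) (prj w q)" using conn_up[OF assms(2)] by blast
  have 2: "conn (w @ [c]) b (ext w (snd c) s) p (prj w p)" using conn_prj[OF assms(2,3)] .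
  have 3: "conn (w @ [c]) b (ext w (snd c) s) (prj w q) q" using conn_prj[OF assms(2,4)] conn_sym by blast
  show "conn (w @ [c]) b (ext w (snd c) s) p q" using conn_trans[OF conn_trans[OF 2 1] 3] .
qed

definition Phi :: "bword \<Rightarrow> nat \<Rightarrow> (nat \<times> nat) set \<Rightarrow> (nat \<times> nat) set" where
  "Phi w b C = {q \<in> {0..<Suc (length w)} \<times> {1..b}. prj w q \<in> C}"

lemma pts_app_eq: "pts (w @ [c]) b = {0..<Suc (length w)} \<times> {1..b}"
  unfolding pts_def by simp

lemma circle_app:
  assumes "w \<noteq> []" "length w \<notin> s" "p \<in> pts (w @ [c]) b"
  shows "circle_of (w @ [c]) b (ext w (snd c) s) p = Phi w b (circle_of w b s (prj w p))"
  unfolding circle_of_def Phi_def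
  using conn_iff[OF assms(1,2,3)] prj_pts[OF assms(1), of _ c b] pts_app_eq[of w c b, symmetric]
  by auto

lemma prj_img: assumes "w \<noteq> []" shows "prj w ` pts (w @ [c]) b = pts w b"
proof
  show "prj w ` pts (w @ [c]) b \<subseteq> pts w b" using prj_pts[OF assms] by blast
  show "pts w b \<subseteq> prj w ` pts (w @ [c]) b"
  proof
    fix x assume "x \<in> pts w b"
    then show "x \<in> prj w ` pts (w @ [c]) b" using prj_id pts_app by (metis image_eqI)
  qed
qed

lemma circles_app:
  assumes "w \<noteq> []" "length w \<notin> s"
  shows "circles (w @ [c]) b (ext w (snd c) s) = Phi w b ` circles w b s"
proof -
  have "circles (w @ [c]) b (ext w (snd c) s) = (\<lambda>p. Phi w b (circle_of w b s (prj w p))) ` pts (w @ [c]) b"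
    unfolding circles_def using circle_app[OF assms] by (simp cong: image_cong)
  also have "\<dots> = Phi w b ` circle_of w b s ` prj w ` pts (w @ [c]) b" by (simp add: image_image)
  finally show ?thesis using prj_img[OF assms(1)] by (simp add: circles_def)
qed

lemma Phi_inv: "C \<subseteq> pts w b \<Longrightarrow> Phi w b C \<inter> pts w b = C"
  unfolding Phi_def pts_def prj_def by auto

lemma Phi_inj: "inj_on (Phi w b) (Pow (pts w b))"
  by (rule inj_on_inverseI[of _ "\<lambda>D. D \<inter> pts w b"]) (simp add: Phi_inv)

lemma circles_sub: "circles w b s \<subseteq> Pow (pts w b)"
  unfolding circles_def circle_of_def by auto

lemma mem_tr: "inj_on f U \<Longrightarrow> P \<subseteq> U \<Longrightarrow> A \<in> U \<Longrightarrow> f A \<in> f ` P \<longleftrightarrow> A \<in> P"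
  by (meson inj_on_image_mem_iff)

lemma ball_img: "(\<forall>x\<in>f ` A. P x) = (\<forall>x\<in>A. P (f x))" by auto

lemma merge_tr:
  assumes inj: "inj_on f U" and X: "X \<subseteq> U" and N: "N \<subseteq> U" and P: "P \<subseteq> U" and P': "P' \<subseteq> U"
  shows "(\<exists>A B C. A \<noteq> B \<and> f ` X = {A, B} \<and> f ` N = {C} \<and> (A \<in> f ` P \<or> B \<in> f ` P) \<and>
            (C \<in> f ` P' \<longleftrightarrow> A \<in> f ` P \<and> B \<in> f ` P))
     \<longleftrightarrow> (\<exists>A B C. A \<noteq> B \<and> X = {A, B} \<and> N = {C} \<and> (A \<in> P \<or> B \<in> P) \<and>
            (C \<in> P' \<longleftrightarrow> A \<in> P \<and> B \<in> P))" (is "?L \<longleftrightarrow> ?R")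
proof
  assume ?L
  then obtain A' B' C' where h: "A' \<noteq> B'" "f ` X = {A', B'}" "f ` N = {C'}" "A' \<in> f ` P \<or> B' \<in> f ` P"
    "C' \<in> f ` P' \<longleftrightarrow> A' \<in> f ` P \<and> B' \<in> f ` P" by blast
  obtain A where A: "A \<in> X" "A' = f A" using h(2) by (metis imageE insertI1)
  obtain B where B: "B \<in> X" "B' = f B" using h(2) by (metis imageE insertI1 insert_commute)
  obtain C where C: "C \<in> N" "C' = f C" using h(3) by (metis imageE insertI1)
  have i1: "f ` X = f ` {A, B}" using h(2) A B by simp
  have i2: "{A, B} \<subseteq> U" using X A B by auto
  have x1: "X = {A, B}" using inj_on_image_eq_iff[OF inj X i2] i1 by blast
  have i3: "f ` N = f ` {C}" using h(3) C by simp
  have i4: "{C} \<subseteq> U" using N C by auto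
  have x2: "N = {C}" using inj_on_image_eq_iff[OF inj N i4] i3 by blast
  have x3: "A \<noteq> B" using h(1) A B by auto
  show ?R using x1 x2 x3
    using h(4,5) A B C mem_tr[OF inj P] mem_tr[OF inj P'] X N by (intro exI[of _ A] exI[of _ B] exI[of _ C]) auto
next
  assume ?R
  then obtain A B C where h: "A \<noteq> B" "X = {A, B}" "N = {C}" "A \<in> P \<or> B \<in> P"
    "C \<in> P' \<longleftrightarrow> A \<in> P \<and> B \<in> P" by blast
  have "f A \<noteq> f B" using h(1,2) inj X by (auto dest: inj_onD)
  then show ?L
    using h mem_tr[OF inj P] mem_tr[OF inj P'] X N by (intro exI[of _ "f A"] exI[of _ "f B"] exI[of _ "f C"]) auto
qed


lemma split_tr:
  assumes inj: "inj_on f U" and X: "X \<subseteq> U" and N: "N \<subseteq> U" and P: "P \<subseteq> U" and P': "P' \<subseteq> U"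
  shows "(\<exists>A C D. C \<noteq> D \<and> f ` X = {A} \<and> f ` N = {C, D} \<and>
            (if A \<in> f ` P then (C \<in> f ` P') \<noteq> (D \<in> f ` P') else C \<notin> f ` P' \<and> D \<notin> f ` P'))
     \<longleftrightarrow> (\<exists>A C D. C \<noteq> D \<and> X = {A} \<and> N = {C, D} \<and>
            (if A \<in> P then (C \<in> P') \<noteq> (D \<in> P') else C \<notin> P' \<and> D \<notin> P'))" (is "?L \<longleftrightarrow> ?R")
proof
  assume ?L
  then obtain A' C' D' where h: "C' \<noteq> D'" "f ` X = {A'}" "f ` N = {C', D'}"
    "(if A' \<in> f ` P then (C' \<in> f ` P') \<noteq> (D' \<in> f ` P') else C' \<notin> f ` P' \<and> D' \<notin> f ` P')" by blast
  obtain A where A: "A \<in> X" "A' = f A" using h(2) by (metis imageE insertI1)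
  obtain C where C: "C \<in> N" "C' = f C" using h(3) by (metis imageE insertI1)
  obtain D where D: "D \<in> N" "D' = f D" using h(3) by (metis imageE insertI1 insert_commute)
  have i1: "f ` N = f ` {C, D}" using h(3) C D by simp
  have i2: "{C, D} \<subseteq> U" using N C D by auto
  have x1: "N = {C, D}" using inj_on_image_eq_iff[OF inj N i2] i1 by blast
  have i3: "f ` X = f ` {A}" using h(2) A by simp
  have i4: "{A} \<subseteq> U" using X A by auto
  have x2: "X = {A}" using inj_on_image_eq_iff[OF inj X i4] i3 by blast
  have x3: "C \<noteq> D" using h(1) C D by auto
  show ?R using x1 x2 x3
    using h(4) A C D mem_tr[OF inj P] mem_tr[OF inj P'] X N by (intro exI[of _ A] exI[of _ C] exI[of _ D]) auto
next
  assume ?R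
  then obtain A C D where h: "C \<noteq> D" "X = {A}" "N = {C, D}"
    "(if A \<in> P then (C \<in> P') \<noteq> (D \<in> P') else C \<notin> P' \<and> D \<notin> P')" by blast
  have "f C \<noteq> f D" using h(1,3) inj N by (auto dest: inj_onD)
  then show ?L
    using h mem_tr[OF inj P] mem_tr[OF inj P'] X N by (intro exI[of _ "f A"] exI[of _ "f C"] exI[of _ "f D"]) auto
qed

lemma incident_tr:
  assumes inj: "inj_on f U" and c1: "circles w b s1 \<subseteq> U" and c2: "circles w b s2 \<subseteq> U"
    and P1: "P1 \<subseteq> U" and P2: "P2 \<subseteq> U"
    and e1: "circles w' b' s1' = f ` circles w b s1" and e2: "circles w' b' s2' = f ` circles w b s2"
  shows "incident w' b' (s1', f ` P1) (s2', f ` P2) = incident w b (s1, P1) (s2, P2)"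
proof -
  let ?X1 = "circles w b s1" let ?X2 = "circles w b s2"
  have s1: "?X1 - ?X2 \<subseteq> U" "?X2 - ?X1 \<subseteq> U" using c1 c2 by auto
  have d1: "f ` ?X1 - f ` ?X2 = f ` (?X1 - ?X2)" using inj_on_image_set_diff[OF inj s1(1) c2] by simp
  have d2: "f ` ?X2 - f ` ?X1 = f ` (?X2 - ?X1)" using inj_on_image_set_diff[OF inj s1(2) c1] by simp
  have d3: "f ` ?X1 \<inter> f ` ?X2 = f ` (?X1 \<inter> ?X2)" using inj_on_image_Int[OF inj c1 c2] by simp
  have fa: "(\<forall>C\<in>f ` (?X1 \<inter> ?X2). C \<in> f ` P1 \<longleftrightarrow> C \<in> f ` P2) \<longleftrightarrow> (\<forall>C\<in>?X1 \<inter> ?X2. C \<in> P1 \<longleftrightarrow> C \<in> P2)"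
  proof -
    have pw: "\<And>C. C \<in> ?X1 \<inter> ?X2 \<Longrightarrow> (f C \<in> f ` P1 \<longleftrightarrow> f C \<in> f ` P2) \<longleftrightarrow> (C \<in> P1 \<longleftrightarrow> C \<in> P2)"
      using mem_tr[OF inj P1] mem_tr[OF inj P2] c1 by blast
    have "(\<forall>C\<in>f ` (?X1 \<inter> ?X2). C \<in> f ` P1 \<longleftrightarrow> C \<in> f ` P2) \<longleftrightarrow> (\<forall>C\<in>?X1 \<inter> ?X2. f C \<in> f ` P1 \<longleftrightarrow> f C \<in> f ` P2)"
      by (rule ball_img)
    also have "\<dots> \<longleftrightarrow> (\<forall>C\<in>?X1 \<inter> ?X2. C \<in> P1 \<longleftrightarrow> C \<in> P2)"
      by (rule ball_cong[OF refl], rule pw)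
    finally show ?thesis .
  qed
  have m: "?X1 - ?X2 \<subseteq> U" "?X2 - ?X1 \<subseteq> U" using c1 c2 by auto
  show ?thesis
    unfolding incident_def Let_def fst_conv snd_conv e1 e2 d1 d2 d3 fa
      merge_tr[OF inj m P1 P2] split_tr[OF inj m P1 P2] by (rule refl)
qed

definition gi :: "bword \<Rightarrow> bool \<Rightarrow> nat \<Rightarrow> kgen \<Rightarrow> kgen" where
  "gi w e b x = (ext w e (fst x), Phi w b ` snd x)"

lemma kgens_iff: "x \<in> kgens w b \<longleftrightarrow> fst x \<subseteq> {0..<length w} \<and> snd x \<subseteq> circles w b (fst x)"
  unfolding kgens_def by (cases x) auto

lemma n_notin: "x \<in> kgens w b \<Longrightarrow> length w \<notin> fst x"
  unfolding kgens_iff by auto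

lemma gi_kgens:
  assumes "w \<noteq> []" "x \<in> kgens w b"
  shows "gi w (snd c) b x \<in> kgens (w @ [c]) b"
proof -
  have n: "length w \<notin> fst x" using n_notin[OF assms(2)] .
  have "fst x \<subseteq> {0..<length w}" "snd x \<subseteq> circles w b (fst x)" using assms(2) kgens_iff by auto
  then show ?thesis unfolding kgens_iff gi_def using circles_app[OF assms(1) n]
    by (auto simp: ext_def)
qed

lemma ext_inj: "length w \<notin> s1 \<Longrightarrow> length w \<notin> s2 \<Longrightarrow> ext w e s1 = ext w e s2 \<Longrightarrow> s1 = s2"
  unfolding ext_def by (cases e) (auto simp: insert_ident)

lemma kg_sub: "x \<in> kgens w b \<Longrightarrow> snd x \<in> Pow (Pow (pts w b))"
proof -
  assume "x \<in> kgens w b"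
  then have "snd x \<subseteq> circles w b (fst x)" by (simp add: kgens_iff)
  then show ?thesis using circles_sub[of w b "fst x"] by simp
qed

lemma gi_inj: "inj_on (gi w e b) (kgens w b)"
proof (rule inj_onI)
  fix x y assume x: "x \<in> kgens w b" and y: "y \<in> kgens w b" and eq: "gi w e b x = gi w e b y"
  have e1: "ext w e (fst x) = ext w e (fst y)" and e2: "Phi w b ` snd x = Phi w b ` snd y"
    using eq unfolding gi_def by simp_all
  have "fst x = fst y" using ext_inj[OF n_notin[OF x] n_notin[OF y] e1] .
  moreover have "snd x = snd y"
    using inj_onD[OF inj_on_image_Pow[OF Phi_inj] e2 kg_sub[OF x] kg_sub[OF y]] .
  ultimately show "x = y" by (simp add: prod_eq_iff)
qed

lemma gi_surj:
  assumes "w \<noteq> []" "y \<in> kgens (w @ [c]) b" "length w \<in> fst y \<longleftrightarrow> \<not> snd c"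
  shows "\<exists>x\<in>kgens w b. y = gi w (snd c) b x"
proof -
  define s where "s = fst y - {length w}"
  have n: "length w \<notin> s" by (simp add: s_def)
  have es: "ext w (snd c) s = fst y" using assms(3) unfolding s_def ext_def by auto
  have sub: "s \<subseteq> {0..<length w}" using assms(2) unfolding kgens_iff s_def by auto
  have Py: "snd y \<subseteq> Phi w b ` circles w b s"
    using assms(2) circles_app[OF assms(1) n, where c=c and b=b] es unfolding kgens_iff by auto
  define P where "P = {C \<in> circles w b s. Phi w b C \<in> snd y}"
  have "Phi w b ` P = snd y" using Py unfolding P_def by auto
  moreover have "(s, P) \<in> kgens w b" using sub unfolding kgens_def P_def by auto
  ultimately show ?thesis using es unfolding gi_def by (intro bexI[of _ "(s, P)"]) (auto simp: prod_eq_iff)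
qed

lemma coeff_zero: "(\<And>c. fst y \<noteq> insert c (fst x)) \<Longrightarrow> kh_coeff w b x y = 0"
  unfolding kh_coeff_def by simp

lemma incident_gi:
  assumes "w \<noteq> []" "x \<in> kgens w b" "y \<in> kgens w b"
  shows "incident (w @ [c]) b (gi w (snd c) b x) (gi w (snd c) b y) = incident w b x y"
proof -
  have nx: "length w \<notin> fst x" and ny: "length w \<notin> fst y" using n_notin assms by auto
  have "snd x \<subseteq> Pow (pts w b)" "snd y \<subseteq> Pow (pts w b)"
    using kg_sub[OF assms(2)] kg_sub[OF assms(3)] by auto
  from incident_tr[OF Phi_inj circles_sub circles_sub this circles_app[OF assms(1) nx] circles_app[OF assms(1) ny]]
  show ?thesis unfolding gi_def by (cases x, cases y) simp
qed

lemma ins_cancel: "n \<notin> A \<Longrightarrow> n \<notin> B \<Longrightarrow> insert n A = insert n B \<longleftrightarrow> A = B"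
  by (rule insert_ident)

lemma coeff_gi:
  assumes "w \<noteq> []" "x \<in> kgens w b" "y \<in> kgens w b"
  shows "kh_coeff (w @ [c]) b (gi w (snd c) b x) (gi w (snd c) b y) = kh_coeff w b x y"
proof -
  have nx: "length w \<notin> fst x" and ny: "length w \<notin> fst y" using n_notin assms by auto
  have sx: "fst x \<subseteq> {0..<length w}" using assms(2) kgens_iff by auto
  let ?g = "\<lambda>c'. if fst (gi w (snd c) b y) = insert c' (fst (gi w (snd c) b x)) \<and>
      incident (w @ [c]) b (gi w (snd c) b x) (gi w (snd c) b y)
      then (-1::int) ^ card {c'' \<in> fst (gi w (snd c) b x). c'' < c'} else 0"
  let ?h = "\<lambda>c'. if fst y = insert c' (fst x) \<and> incident w b x y
      then (-1::int) ^ card {c'' \<in> fst x. c'' < c'} else 0"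
  have "sum ?g ({0..<length (w @ [c])} - fst (gi w (snd c) b x)) = sum ?h ({0..<length w} - fst x)"
  proof (rule sum.mono_neutral_cong_right)
    show "finite ({0..<length (w @ [c])} - fst (gi w (snd c) b x))" by simp
    show "{0..<length w} - fst x \<subseteq> {0..<length (w @ [c])} - fst (gi w (snd c) b x)"
      by (auto simp: gi_def ext_def)
    show "\<forall>i\<in>{0..<length (w @ [c])} - fst (gi w (snd c) b x) - ({0..<length w} - fst x). ?g i = 0"
    proof
      fix i assume "i \<in> {0..<length (w @ [c])} - fst (gi w (snd c) b x) - ({0..<length w} - fst x)"
      then have "i = length w" "snd c" by (auto simp: gi_def ext_def split: if_splits)
      then have "fst (gi w (snd c) b y) \<noteq> insert i (fst (gi w (snd c) b x))"
        using ny by (auto simp: gi_def ext_def)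
      then show "?g i = 0" by simp
    qed
    show "?g i = ?h i" if i: "i \<in> {0..<length w} - fst x" for i
    proof -
      have e1: "(fst (gi w (snd c) b y) = insert i (fst (gi w (snd c) b x))) = (fst y = insert i (fst x))"
      proof (cases "snd c")
        case True then show ?thesis by (simp add: gi_def ext_def)
      next
        case False
        have "i \<noteq> length w" using i by auto
        then have "length w \<notin> insert i (fst x)" using nx by auto
        then show ?thesis using False ny ins_cancel[of "length w" "fst y" "insert i (fst x)"]
          by (simp add: gi_def ext_def insert_commute)
      qed
      have e2: "{c'' \<in> fst (gi w (snd c) b x). c'' < i} = {c'' \<in> fst x. c'' < i}"
        using i unfolding gi_def ext_def by auto
      show "?g i = ?h i" by (simp only: e1 e2 incident_gi[OF assms])
    qed
  qed
  then show ?thesis by (simp only: kh_coeff_def)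
qed

lemma kgens_finite: "finite (kgens w b)"
proof -
  have A: "kgens w b \<subseteq> Pow {0..<length w} \<times> Pow (Pow (pts w b))"
  proof
    fix x assume "x \<in> kgens w b"
    then show "x \<in> Pow {0..<length w} \<times> Pow (Pow (pts w b))"
      using kg_sub[of x w b] unfolding kgens_iff by (cases x) simp
  qed
  have "finite (pts w b)" unfolding pts_def by simp
  then have B: "finite (Pow {0..<length w} \<times> Pow (Pow (pts w b)))" by simp
  show ?thesis by (rule finite_subset[OF A B])
qed

lemma os_app: "oriented_state (w @ [c]) = ext w (snd c) (oriented_state w)"
  unfolding oriented_state_def ext_def by (auto simp: nth_append less_Suc_eq)

lemma os_kgens: "(oriented_state w, P) \<in> kgens w b \<longleftrightarrow> P \<subseteq> circles w b (oriented_state w)"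
  unfolding kgens_def oriented_state_def by auto

lemma psi_gen_k: "psi_gen w \<in> kgens w b"
  unfolding psi_gen_def using os_kgens by auto

lemma gi_psi: "gi w (snd c) b (psi_gen w) = psi_gen (w @ [c])"
  unfolding gi_def psi_gen_def os_app by simp

lemma prj0: "w \<noteq> [] \<Longrightarrow> prj w (0, q) = (0, q)"
  unfolding prj_def by simp

lemma pts0: "w \<noteq> [] \<Longrightarrow> q \<in> {1..b} \<Longrightarrow> (0, q) \<in> pts w b"
  unfolding pts_def by auto

lemma circle0:
  assumes "w \<noteq> []" "q \<in> {1..b}" "length w \<notin> s"
  shows "circle_of (w @ [c]) b (ext w (snd c) s) (0, q) = Phi w b (circle_of w b s (0, q))"
  using circle_app[OF assms(1,3) pts_app[OF pts0[OF assms(1,2)]]] prj0[OF assms(1)] by simp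

lemma psi'_gen_k: "w \<noteq> [] \<Longrightarrow> q \<in> {1..b} \<Longrightarrow> psi'_gen w b q \<in> kgens w b"
  unfolding psi'_gen_def os_kgens circles_def using pts0 by auto

lemma os_n: "length w \<notin> oriented_state w"
  unfolding oriented_state_def by auto

lemma gi_psi':
  assumes "w \<noteq> []" "q \<in> {1..b}"
  shows "gi w (snd c) b (psi'_gen w b q) = psi'_gen (w @ [c]) b q"
  unfolding gi_def psi'_gen_def os_app using circle0[OF assms os_n] by simp

lemma marked_gi:
  assumes "w \<noteq> []" "q \<in> {1..b}" "x \<in> kgens w b"
  shows "circle_of (w @ [c]) b (fst (gi w (snd c) b x)) (0, q) \<in> snd (gi w (snd c) b x)
     \<longleftrightarrow> circle_of w b (fst x) (0, q) \<in> snd x"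
proof -
  have "circle_of (w @ [c]) b (fst (gi w (snd c) b x)) (0, q) = Phi w b (circle_of w b (fst x) (0, q))"
    unfolding gi_def using circle0[OF assms(1,2) n_notin[OF assms(3)]] by simp
  moreover have "circle_of w b (fst x) (0, q) \<in> Pow (pts w b)" unfolding circle_of_def by auto
  moreover have "snd x \<subseteq> Pow (pts w b)" using kg_sub[OF assms(3)] by simp
  ultimately show ?thesis unfolding gi_def using inj_on_image_mem_iff[OF Phi_inj] by simp
qed

definition push :: "bword \<Rightarrow> bool \<Rightarrow> nat \<Rightarrow> (kgen \<Rightarrow> int) \<Rightarrow> kgen \<Rightarrow> int" where
  "push w e b f x' = (if x' \<in> gi w e b ` kgens w b then f (the_inv_into (kgens w b) (gi w e b) x') else 0)"

lemma push_sum: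
  assumes "w \<noteq> []"
  shows "(\<Sum>x'\<in>kgens (w @ [c]) b. push w (snd c) b f x' * g x') = (\<Sum>x\<in>kgens w b. f x * g (gi w (snd c) b x))"
proof -
  have sub: "gi w (snd c) b ` kgens w b \<subseteq> kgens (w @ [c]) b" using gi_kgens[OF assms] by blast
  have "(\<Sum>x'\<in>kgens (w @ [c]) b. push w (snd c) b f x' * g x') =
        (\<Sum>x'\<in>gi w (snd c) b ` kgens w b. push w (snd c) b f x' * g x')"
    by (rule sum.mono_neutral_right[OF kgens_finite sub]) (auto simp: push_def)
  also have "\<dots> = (\<Sum>x\<in>kgens w b. push w (snd c) b f (gi w (snd c) b x) * g (gi w (snd c) b x))"
    by (rule sum.reindex[OF gi_inj, unfolded comp_def])
  also have "\<dots> = (\<Sum>x\<in>kgens w b. f x * g (gi w (snd c) b x))"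
    by (rule sum.cong) (auto simp: push_def the_inv_into_f_f[OF gi_inj])
  finally show ?thesis .
qed

lemma pull_sum:
  assumes "w \<noteq> []" "snd c" "\<And>x'. x' \<in> kgens (w @ [c]) b \<Longrightarrow> length w \<in> fst x' \<Longrightarrow> g x' = 0"
  shows "(\<Sum>x'\<in>kgens (w @ [c]) b. g x') = (\<Sum>x\<in>kgens w b. g (gi w (snd c) b x))"
proof -
  have sub: "gi w (snd c) b ` kgens w b \<subseteq> kgens (w @ [c]) b" using gi_kgens[OF assms(1)] by blast
  have "(\<Sum>x'\<in>kgens (w @ [c]) b. g x') = (\<Sum>x'\<in>gi w (snd c) b ` kgens w b. g x')"
  proof (rule sum.mono_neutral_right[OF kgens_finite sub], rule ballI)
    fix x' assume x': "x' \<in> kgens (w @ [c]) b - gi w (snd c) b ` kgens w b"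
    have "length w \<in> fst x'"
    proof (rule ccontr)
      assume "length w \<notin> fst x'"
      then have "\<exists>x\<in>kgens w b. x' = gi w (snd c) b x" using gi_surj[OF assms(1), of x' c b] x' assms(2) by auto
      then show False using x' by auto
    qed
    then show "g x' = 0" using assms(3) x' by auto
  qed
  also have "\<dots> = (\<Sum>x\<in>kgens w b. g (gi w (snd c) b x))"
    by (rule sum.reindex[OF gi_inj, unfolded comp_def])
  finally show ?thesis .
qed

lemma fst_gi_n: "\<not> snd c \<Longrightarrow> length w \<in> fst (gi w (snd c) b x)"
  unfolding gi_def ext_def by simp

lemma neg_step:
  assumes w: "w \<noteq> []" and e: "\<not> snd c" and v: "psi_vanishes b w"
  shows "psi_vanishes b (w @ [c])"
proof -
  obtain f where hf: "\<forall>y\<in>kgens w b. kh_d w b f y = (if y = psi_gen w then 1 else 0)"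
    using v unfolding psi_vanishes_def by blast
  let ?f = "push w (snd c) b f"
  have "kh_d (w @ [c]) b ?f y' = (if y' = psi_gen (w @ [c]) then 1 else 0)" if y': "y' \<in> kgens (w @ [c]) b" for y'
  proof -
    have s: "kh_d (w @ [c]) b ?f y' = (\<Sum>x\<in>kgens w b. f x * kh_coeff (w @ [c]) b (gi w (snd c) b x) y')"
      unfolding kh_d_def by (rule push_sum[OF w])
    show ?thesis
    proof (cases "length w \<in> fst y'")
      case True
      then obtain y where y: "y \<in> kgens w b" "y' = gi w (snd c) b y"
        using gi_surj[OF w y'] e by auto
      have "kh_d (w @ [c]) b ?f y' = (\<Sum>x\<in>kgens w b. f x * kh_coeff (w @ [c]) b (gi w (snd c) b x) (gi w (snd c) b y))"
        using s y(2) by simp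
      also have "\<dots> = kh_d w b f y"
        unfolding kh_d_def by (rule sum.cong[OF refl]) (simp add: coeff_gi[OF w _ y(1)])
      finally have "kh_d (w @ [c]) b ?f y' = kh_d w b f y" .
      moreover have "(y' = psi_gen (w @ [c])) = (y = psi_gen w)"
        unfolding y(2) using inj_on_eq_iff[OF gi_inj y(1) psi_gen_k, of "snd c"] gi_psi[of w c b] by simp
      ultimately show ?thesis using hf y(1) by simp
    next
      case False
      have "kh_coeff (w @ [c]) b (gi w (snd c) b x) y' = 0" for x
        by (rule coeff_zero) (use False fst_gi_n[OF e, of w b x] in auto)
      then have "kh_d (w @ [c]) b ?f y' = 0" unfolding s by simp
      moreover have "y' \<noteq> psi_gen (w @ [c])"
        using False fst_gi_n[OF e, of w b "psi_gen w"] gi_psi[of w c b] by auto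
      ultimately show ?thesis by simp
    qed
  qed
  then show ?thesis unfolding psi_vanishes_def by blast
qed

lemma pos_step:
  assumes w: "w \<noteq> []" and e: "snd c" and v: "psi_vanishes b (w @ [c])"
  shows "psi_vanishes b w"
proof -
  obtain f where hf: "\<forall>y\<in>kgens (w @ [c]) b. kh_d (w @ [c]) b f y = (if y = psi_gen (w @ [c]) then 1 else 0)"
    using v unfolding psi_vanishes_def by blast
  let ?f = "\<lambda>x. f (gi w (snd c) b x)"
  have "kh_d w b ?f y = (if y = psi_gen w then 1 else 0)" if y: "y \<in> kgens w b" for y
  proof -
    have ny: "length w \<notin> fst (gi w (snd c) b y)" using n_notin[OF y] e by (simp add: gi_def ext_def)
    have "kh_d (w @ [c]) b f (gi w (snd c) b y) =
        (\<Sum>x\<in>kgens w b. f (gi w (snd c) b x) * kh_coeff (w @ [c]) b (gi w (snd c) b x) (gi w (snd c) b y))"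
      unfolding kh_d_def
    proof (rule pull_sum[OF w e])
      fix x' :: kgen assume "length w \<in> fst x'"
      then have "kh_coeff (w @ [c]) b x' (gi w (snd c) b y) = 0"
        by (intro coeff_zero) (use ny in auto)
      then show "f x' * kh_coeff (w @ [c]) b x' (gi w (snd c) b y) = 0" by simp
    qed
    also have "\<dots> = kh_d w b ?f y"
      unfolding kh_d_def by (rule sum.cong[OF refl]) (simp add: coeff_gi[OF w _ y])
    finally have "kh_d w b ?f y = kh_d (w @ [c]) b f (gi w (snd c) b y)" ..
    moreover have "(gi w (snd c) b y = psi_gen (w @ [c])) = (y = psi_gen w)"
      using inj_on_eq_iff[OF gi_inj y psi_gen_k, of "snd c"] gi_psi[of w c b] by simp
    ultimately show ?thesis using hf gi_kgens[OF w y] by simp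
  qed
  then show ?thesis unfolding psi_vanishes_def by blast
qed


lemma neg_step':
  assumes w: "w \<noteq> []" and e: "\<not> snd c" and q: "q \<in> {1..b}" and v: "psi'_vanishes b q w"
  shows "psi'_vanishes b q (w @ [c])"
proof -
  obtain f where hf: "\<forall>y\<in>kgens w b. circle_of w b (fst y) (0, q) \<in> snd y \<longrightarrow>
        even (kh_d w b f y - (if y = psi'_gen w b q then 1 else 0))"
    using v unfolding psi'_vanishes_def by blast
  let ?f = "push w (snd c) b f"
  have "even (kh_d (w @ [c]) b ?f y' - (if y' = psi'_gen (w @ [c]) b q then 1 else 0))"
    if y': "y' \<in> kgens (w @ [c]) b" and m: "circle_of (w @ [c]) b (fst y') (0, q) \<in> snd y'" for y'
  proof -
    have s: "kh_d (w @ [c]) b ?f y' = (\<Sum>x\<in>kgens w b. f x * kh_coeff (w @ [c]) b (gi w (snd c) b x) y')"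
      unfolding kh_d_def by (rule push_sum[OF w])
    show ?thesis
    proof (cases "length w \<in> fst y'")
      case True
      then obtain y where y: "y \<in> kgens w b" "y' = gi w (snd c) b y"
        using gi_surj[OF w y'] e by auto
      have "kh_d (w @ [c]) b ?f y' = (\<Sum>x\<in>kgens w b. f x * kh_coeff (w @ [c]) b (gi w (snd c) b x) (gi w (snd c) b y))"
        using s y(2) by simp
      also have "\<dots> = kh_d w b f y"
        unfolding kh_d_def by (rule sum.cong[OF refl]) (simp add: coeff_gi[OF w _ y(1)])
      finally have 1: "kh_d (w @ [c]) b ?f y' = kh_d w b f y" .
      have 2: "(y' = psi'_gen (w @ [c]) b q) = (y = psi'_gen w b q)"
        unfolding y(2) using inj_on_eq_iff[OF gi_inj y(1) psi'_gen_k[OF w q], of "snd c"] gi_psi'[OF w q, of c] by simp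
      have 3: "circle_of w b (fst y) (0, q) \<in> snd y" using m marked_gi[OF w q y(1), of c] y(2) by simp
      show ?thesis using hf y(1) 1 2 3 by simp
    next
      case False
      have "kh_coeff (w @ [c]) b (gi w (snd c) b x) y' = 0" for x
        by (rule coeff_zero) (use False fst_gi_n[OF e, of w b x] in auto)
      then have "kh_d (w @ [c]) b ?f y' = 0" unfolding s by simp
      moreover have "y' \<noteq> psi'_gen (w @ [c]) b q"
        using False fst_gi_n[OF e, of w b "psi'_gen w b q"] gi_psi'[OF w q, of c] by auto
      ultimately show ?thesis by simp
    qed
  qed
  then show ?thesis unfolding psi'_vanishes_def by blast
qed

lemma pos_step':
  assumes w: "w \<noteq> []" and e: "snd c" and q: "q \<in> {1..b}" and v: "psi'_vanishes b q (w @ [c])"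
  shows "psi'_vanishes b q w"
proof -
  obtain f where hf: "\<forall>y\<in>kgens (w @ [c]) b. circle_of (w @ [c]) b (fst y) (0, q) \<in> snd y \<longrightarrow>
        even (kh_d (w @ [c]) b f y - (if y = psi'_gen (w @ [c]) b q then 1 else 0))"
    using v unfolding psi'_vanishes_def by blast
  let ?f = "\<lambda>x. f (gi w (snd c) b x)"
  have "even (kh_d w b ?f y - (if y = psi'_gen w b q then 1 else 0))"
    if y: "y \<in> kgens w b" and m: "circle_of w b (fst y) (0, q) \<in> snd y" for y
  proof -
    have ny: "length w \<notin> fst (gi w (snd c) b y)" using n_notin[OF y] e by (simp add: gi_def ext_def)
    have "kh_d (w @ [c]) b f (gi w (snd c) b y) =
        (\<Sum>x\<in>kgens w b. f (gi w (snd c) b x) * kh_coeff (w @ [c]) b (gi w (snd c) b x) (gi w (snd c) b y))"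
      unfolding kh_d_def
    proof (rule pull_sum[OF w e])
      fix x' :: kgen assume "length w \<in> fst x'"
      then have "kh_coeff (w @ [c]) b x' (gi w (snd c) b y) = 0"
        by (intro coeff_zero) (use ny in auto)
      then show "f x' * kh_coeff (w @ [c]) b x' (gi w (snd c) b y) = 0" by simp
    qed
    also have "\<dots> = kh_d w b ?f y"
      unfolding kh_d_def by (rule sum.cong[OF refl]) (simp add: coeff_gi[OF w _ y])
    finally have 1: "kh_d w b ?f y = kh_d (w @ [c]) b f (gi w (snd c) b y)" ..
    have 2: "(gi w (snd c) b y = psi'_gen (w @ [c]) b q) = (y = psi'_gen w b q)"
      using inj_on_eq_iff[OF gi_inj y psi'_gen_k[OF w q], of "snd c"] gi_psi'[OF w q, of c] by simp
    have 3: "circle_of (w @ [c]) b (fst (gi w (snd c) b y)) (0, q) \<in> snd (gi w (snd c) b y)"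
      using m marked_gi[OF w q y, of c] by simp
    show ?thesis using hf gi_kgens[OF w y] 1 2 3 by simp
  qed
  then show ?thesis unfolding psi'_vanishes_def by blast
qed

lemma chain_up:
  assumes step: "\<And>w c. w \<noteq> [] \<Longrightarrow> snd c = e \<Longrightarrow> Pv w \<Longrightarrow> Pv (w @ [c])"
  shows "w \<noteq> [] \<Longrightarrow> \<forall>c\<in>set l. snd c = e \<Longrightarrow> Pv w \<Longrightarrow> Pv (w @ l)"
proof (induction l rule: rev_induct)
  case Nil then show ?case by simp
next
  case (snoc x xs)
  have "Pv (w @ xs)" using snoc by simp
  moreover have "w @ xs \<noteq> []" using snoc.prems(1) by simp
  ultimately show ?case using step[of "w @ xs" x] snoc.prems(2) by simp
qed

lemma chain_down:
  assumes step: "\<And>w c. w \<noteq> [] \<Longrightarrow> snd c = e \<Longrightarrow> Pv (w @ [c]) \<Longrightarrow> Pv w"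
  shows "w \<noteq> [] \<Longrightarrow> \<forall>c\<in>set l. snd c = e \<Longrightarrow> Pv (w @ l) \<Longrightarrow> Pv w"
proof (induction l rule: rev_induct)
  case Nil then show ?case by simp
next
  case (snoc x xs)
  have "w @ xs \<noteq> []" using snoc.prems(1) by simp
  then have "Pv (w @ xs)" using step[of "w @ xs" x] snoc.prems(2,3) by simp
  then show ?case using snoc by simp
qed

lemma ev_up:
  assumes "\<forall>m\<ge>1. A m \<longrightarrow> A (Suc m)"
  shows "\<exists>N. \<forall>m>N. A m = A (Suc m)"
proof (cases "\<exists>m0\<ge>1. A m0")
  case True
  then obtain m0 where m0: "m0 \<ge> 1" "A m0" by blast
  have "A m" if "m \<ge> m0" for m
    using that
  proof (induction m rule: dec_induct)
    case base then show ?case using m0 by simp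
  next
    case (step n) then show ?case using assms m0 by simp
  qed
  then show ?thesis by (intro exI[of _ m0]) auto
next
  case False
  then show ?thesis by (intro exI[of _ 0]) auto
qed

lemma ev_gen:
  assumes "\<forall>m\<ge>1. if e then (A (Suc m) \<longrightarrow> A m) else (A m \<longrightarrow> A (Suc m))"
  shows "\<exists>N. \<forall>m>N. A m = A (Suc m)"
proof (cases e)
  case True
  then have "\<forall>m\<ge>1. \<not> A m \<longrightarrow> \<not> A (Suc m)" using assms by auto
  from ev_up[OF this] show ?thesis by auto
next
  case False
  then show ?thesis using assms ev_up by auto
qed

lemma ev_fam:
  assumes "finite Q" "\<forall>q\<in>Q. \<exists>N. \<forall>m>N. A m q = A (Suc m) q"
  shows "\<exists>N. \<forall>m>N. \<forall>q\<in>Q. A m q = A (Suc m) q"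
proof -
  from bchoice[OF assms(2)] obtain Nf where Nf: "\<forall>q\<in>Q. \<forall>m>Nf q. A m q = A (Suc m) q" ..
  show ?thesis
  proof (intro exI[of _ "Max (insert 0 (Nf ` Q))"] allI impI ballI)
    fix m q assume m: "m > Max (insert 0 (Nf ` Q))" and q: "q \<in> Q"
    have "Nf q \<le> Max (insert 0 (Nf ` Q))" using assms(1) q by simp
    then have lt: "Nf q < m" using m by linarith
    have "\<forall>m>Nf q. A m q = A (Suc m) q" using Nf q by blast
    then show "A m q = A (Suc m) q" using lt by blast
  qed
qed

lemma concat_rep_Suc: "concat (replicate (Suc m) T) = concat (replicate m T) @ T"
  by (induction m) auto

theorem theorem1p5:
  fixes b a i :: nat and \<beta> :: bword and e :: bool
  assumes "braid_word b \<beta>"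
    and "2 \<le> a" and "a < b" and "1 \<le> i" and "i \<le> b - a + 1"
  shows "\<exists>N. \<forall>m>N.
     (psi_vanishes b (\<beta> @ concat (replicate m (full_twist a i e)))
        \<longleftrightarrow> psi_vanishes b (\<beta> @ concat (replicate (Suc m) (full_twist a i e))))
   \<and> (\<forall>q\<in>{1..b}. psi'_vanishes b q (\<beta> @ concat (replicate m (full_twist a i e)))
        \<longleftrightarrow> psi'_vanishes b q (\<beta> @ concat (replicate (Suc m) (full_twist a i e))))"
proof -
  let ?T = "full_twist a i e"
  let ?W = "\<lambda>m. \<beta> @ concat (replicate m ?T)"
  have Tne: "?T \<noteq> []" using assms(2) unfolding full_twist_def by (cases a) auto
  have Te: "\<forall>c\<in>set ?T. snd c = e" unfolding full_twist_def by auto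
  have Wne: "?W m \<noteq> []" if "m \<ge> 1" for m
    using that Tne by (cases m) (auto simp: concat_rep_Suc)
  have WS: "?W (Suc m) = ?W m @ ?T" for m by (simp only: concat_rep_Suc append_assoc)
  have stepP: "\<forall>m\<ge>1. if e then (psi_vanishes b (?W (Suc m)) \<longrightarrow> psi_vanishes b (?W m))
                       else (psi_vanishes b (?W m) \<longrightarrow> psi_vanishes b (?W (Suc m)))"
  proof (intro allI impI)
    fix m :: nat assume m: "m \<ge> 1"
    show "if e then (psi_vanishes b (?W (Suc m)) \<longrightarrow> psi_vanishes b (?W m))
                       else (psi_vanishes b (?W m) \<longrightarrow> psi_vanishes b (?W (Suc m)))"
    proof (cases e)
      case True
      have "psi_vanishes b (?W m @ ?T) \<Longrightarrow> psi_vanishes b (?W m)"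
        by (rule chain_down[of e "psi_vanishes b", OF _ Wne[OF m] Te]) (use pos_step True in blast)
      then show ?thesis using True WS by simp
    next
      case False
      have "psi_vanishes b (?W m) \<Longrightarrow> psi_vanishes b (?W m @ ?T)"
        by (rule chain_up[of e "psi_vanishes b", OF _ Wne[OF m] Te]) (use neg_step False in blast)
      then show ?thesis using False WS by simp
    qed
  qed
  have stepQ: "\<forall>m\<ge>1. if e then (psi'_vanishes b q (?W (Suc m)) \<longrightarrow> psi'_vanishes b q (?W m))
                       else (psi'_vanishes b q (?W m) \<longrightarrow> psi'_vanishes b q (?W (Suc m)))"
    if q: "q \<in> {1..b}" for q
  proof (intro allI impI)
    fix m :: nat assume m: "m \<ge> 1"
    show "if e then (psi'_vanishes b q (?W (Suc m)) \<longrightarrow> psi'_vanishes b q (?W m))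
                       else (psi'_vanishes b q (?W m) \<longrightarrow> psi'_vanishes b q (?W (Suc m)))"
    proof (cases e)
      case True
      have "psi'_vanishes b q (?W m @ ?T) \<Longrightarrow> psi'_vanishes b q (?W m)"
        by (rule chain_down[of e "psi'_vanishes b q", OF _ Wne[OF m] Te]) (use pos_step' True q in blast)
      then show ?thesis using True WS by simp
    next
      case False
      have "psi'_vanishes b q (?W m) \<Longrightarrow> psi'_vanishes b q (?W m @ ?T)"
        by (rule chain_up[of e "psi'_vanishes b q", OF _ Wne[OF m] Te]) (use neg_step' False q in blast)
      then show ?thesis using False WS by simp
    qed
  qed
  obtain N1 where N1: "\<forall>m>N1. psi_vanishes b (?W m) = psi_vanishes b (?W (Suc m))"
    using ev_gen[OF stepP] by blast
  obtain N2 where N2: "\<forall>m>N2. \<forall>q\<in>{1..b}. psi'_vanishes b q (?W m) = psi'_vanishes b q (?W (Suc m))"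
    using ev_fam[of "{1..b}" "\<lambda>m q. psi'_vanishes b q (?W m)"] ev_gen[OF stepQ] by auto
  show ?thesis
    by (rule exI[of _ "max N1 N2"]) (use N1 N2 in auto)
qed

end
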